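(* Fix $0\le p_d,p_c\le1$. Let $\tilde{\mathcal{C}}(p_d,p_c)$ be the capacity region (with no CSIT) of any two-user binary fading interference channel $\tilde Y_i[t] = \tilde G_{ii}[t]\tilde X_i[t]\oplus \tilde G_{\bar i i}[t]\tilde X_{\bar i}[t]$, $i=1,2$, whose channel gain vectors $(\tilde G_{11}[t],\tilde G_{12}[t],\tilde G_{21}[t],\tilde G_{22}[t])$ are independent and identically distributed over time, arbitrarily correlated with each other at a given time, subject to: for $i=1,2$, $\Pr(\tilde G_{ii}[t]=1)=p_d$, $\Pr(\tilde G_{\bar i i}[t]=1)=p_c$, and $\Pr(\tilde G_{ii}[t]=1,\tilde G_{\bar i i}[t]=1)=\Pr(\tilde G_{ii}[t]=1)\Pr(\tilde G_{\bar i i}[t]=1)$. Then $\mathcal{C}(p_d,p_c)\subseteq\tilde{\mathcal{C}}(p_d,p_c)$, where $\mathcal{C}(p_d,p_c)$ is the capacity region of the two-user BFIC with no CSIT with mutually independent gains.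
   Context: Two-user BFIC: at each time $t$, ${\sf Tx}_i$ sends $X_i[t]\in\{0,1\}$ and ${\sf Rx}_i$ receives $Y_i[t] = G_{ii}[t]X_i[t] \oplus G_{\bar i i}[t] X_{\bar i}[t]$, $\bar i=3-i$, arithmetic in $\mathbb{F}_2$; gains $G_{ij}[t]$ (from ${\sf Tx}_i$ to ${\sf Rx}_j$) are mutually independent Bernoulli, independent over time, $G_{ii}[t]\sim\mathcal{B}(p_d)$, $G_{i\bar i}[t]\sim\mathcal{B}(p_c)$. For either channel (original or correlated), ${\sf Tx}_i$ sends a uniform message $W_i\in\{1,\dots,2^{nR_i}\}$, messages and gains are mutually independent, encoding is $X_i[t]=f_{i,t}(W_i)$ (no CSIT), and ${\sf Rx}_i$ decodes using its received sequence and the gains of its two incoming links, $\hat W_i=\varphi_i(Y_i^n,G_{ii}^n,G_{\bar i i}^n)$. $(R_1,R_2)$ is achievable if the average error probabilities at both receivers vanish as $n\to\infty$; the capacity region is the closure of achievable pairs. *)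

theory Defs
  imports "HOL-Probability.Probability"
begin

text \<open>A gain vector at one time instant: (G11, G12, G21, G22), where Gij is the
gain of the link from Tx i to Rx j.\<close>
type_synonym gain = "bool \<times> bool \<times> bool \<times> bool"

definition g11 :: "gain \<Rightarrow> bool" where "g11 g = fst g"
definition g12 :: "gain \<Rightarrow> bool" where "g12 g = fst (snd g)"
definition g21 :: "gain \<Rightarrow> bool" where "g21 g = fst (snd (snd g))"
definition g22 :: "gain \<Rightarrow> bool" where "g22 g = snd (snd (snd g))"

definition indep_gains :: "real \<Rightarrow> real \<Rightarrow> gain pmf" where
  "indep_gains pd pc =
     pair_pmf (bernoulli_pmf pd) (pair_pmf (bernoulli_pmf pc)
       (pair_pmf (bernoulli_pmf pc) (bernoulli_pmf pd)))"

definition msg_size :: "real \<Rightarrow> nat \<Rightarrow> nat" where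
  "msg_size R n = nat \<lceil>2 powr (real n * R)\<rceil>"

definition seq_prob :: "gain pmf \<Rightarrow> gain list \<Rightarrow> real" where
  "seq_prob Q gs = prod_list (map (pmf Q) gs)"

text \<open>Received sequences (multiplication = conjunction, addition = xor).\<close>
definition rx1 :: "nat \<Rightarrow> gain list \<Rightarrow> (nat \<Rightarrow> bool) \<Rightarrow> (nat \<Rightarrow> bool) \<Rightarrow> bool list" where
  "rx1 n gs x1 x2 = map (\<lambda>t. (g11 (gs ! t) \<and> x1 t) \<noteq> (g21 (gs ! t) \<and> x2 t)) [0..<n]"

definition rx2 :: "nat \<Rightarrow> gain list \<Rightarrow> (nat \<Rightarrow> bool) \<Rightarrow> (nat \<Rightarrow> bool) \<Rightarrow> bool list" where
  "rx2 n gs x1 x2 = map (\<lambda>t. (g22 (gs ! t) \<and> x2 t) \<noteq> (g12 (gs ! t) \<and> x1 t)) [0..<n]"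

text \<open>Average error probabilities of a code of block length n with M1, M2 messages
(messages 0..<Mi, uniform), encoders f_i w t (no CSIT), and decoders that see the
received sequence and the gains of the two incoming links.\<close>
definition err1 ::
  "gain pmf \<Rightarrow> nat \<Rightarrow> nat \<Rightarrow> nat \<Rightarrow> (nat \<Rightarrow> nat \<Rightarrow> bool) \<Rightarrow> (nat \<Rightarrow> nat \<Rightarrow> bool)
   \<Rightarrow> (bool list \<Rightarrow> bool list \<Rightarrow> bool list \<Rightarrow> nat) \<Rightarrow> real" where
  "err1 Q n M1 M2 f1 f2 \<phi>1 =
     (\<Sum>w1<M1. \<Sum>w2<M2. \<Sum>gs\<in>{gs. length gs = n}.
        seq_prob Q gs *
        (if \<phi>1 (rx1 n gs (f1 w1) (f2 w2)) (map g11 gs) (map g21 gs) = w1 then 0 else 1))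
     / (real M1 * real M2)"

definition err2 ::
  "gain pmf \<Rightarrow> nat \<Rightarrow> nat \<Rightarrow> nat \<Rightarrow> (nat \<Rightarrow> nat \<Rightarrow> bool) \<Rightarrow> (nat \<Rightarrow> nat \<Rightarrow> bool)
   \<Rightarrow> (bool list \<Rightarrow> bool list \<Rightarrow> bool list \<Rightarrow> nat) \<Rightarrow> real" where
  "err2 Q n M1 M2 f1 f2 \<phi>2 =
     (\<Sum>w1<M1. \<Sum>w2<M2. \<Sum>gs\<in>{gs. length gs = n}.
        seq_prob Q gs *
        (if \<phi>2 (rx2 n gs (f1 w1) (f2 w2)) (map g22 gs) (map g12 gs) = w2 then 0 else 1))
     / (real M1 * real M2)"

definition achievable :: "gain pmf \<Rightarrow> real \<Rightarrow> real \<Rightarrow> bool" where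
  "achievable Q R1 R2 \<longleftrightarrow> R1 \<ge> 0 \<and> R2 \<ge> 0 \<and>
     (\<exists>f1 f2 :: nat \<Rightarrow> nat \<Rightarrow> nat \<Rightarrow> bool.
      \<exists>\<phi>1 \<phi>2 :: nat \<Rightarrow> bool list \<Rightarrow> bool list \<Rightarrow> bool list \<Rightarrow> nat.
        (\<lambda>n. err1 Q n (msg_size R1 n) (msg_size R2 n) (f1 n) (f2 n) (\<phi>1 n)) \<longlonglongrightarrow> 0 \<and>
        (\<lambda>n. err2 Q n (msg_size R1 n) (msg_size R2 n) (f1 n) (f2 n) (\<phi>2 n)) \<longlonglongrightarrow> 0)"

definition capacity_region :: "gain pmf \<Rightarrow> (real \<times> real) set" where
  "capacity_region Q = closure {(R1, R2). achievable Q R1 R2}"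

end

theory Submission imports Defs begin

lemma sum_lists_Suc:
  fixes f :: "'a::finite list \<Rightarrow> 'b::comm_monoid_add"
  shows "(\<Sum>gs\<in>{gs. length gs = Suc n}. f gs) = (\<Sum>x\<in>UNIV. \<Sum>gs\<in>{gs. length gs = n}. f (x # gs))"
proof -
  have e: "{gs::'a list. length gs = Suc n} = (\<lambda>(x,gs). x # gs) ` (UNIV \<times> {gs. length gs = n})"
    by (auto simp: image_iff length_Suc_conv)
  have i: "inj_on (\<lambda>(x,gs). x # gs) (UNIV \<times> {gs::'a list. length gs = n})"
    by (auto simp: inj_on_def)
  show ?thesis unfolding e sum.reindex[OF i] sum.cartesian_product
    by (simp add: split_def)
qed

lemma fiber_sum:
  fixes Q :: "'a::finite pmf" and h :: "'a \<Rightarrow> 'b::finite"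
  shows "(\<Sum>x\<in>UNIV. pmf Q x * G (h x)) = (\<Sum>y\<in>UNIV. pmf (map_pmf h Q) y * G y)"
proof -
  have "(\<Sum>y\<in>UNIV. pmf (map_pmf h Q) y * G y) = (\<Sum>y\<in>UNIV. \<Sum>x\<in>{x\<in>UNIV. h x = y}. pmf Q x * G (h x))"
  proof (rule sum.cong[OF refl])
    fix y
    have "pmf (map_pmf h Q) y = (\<Sum>x\<in>{x\<in>UNIV. h x = y}. pmf Q x)"
      by (simp add: pmf_map measure_measure_pmf_finite vimage_def)
    then show "pmf (map_pmf h Q) y * G y = (\<Sum>x\<in>{x\<in>UNIV. h x = y}. pmf Q x * G (h x))"
      by (simp add: sum_distrib_right)
  qed
  also have "\<dots> = (\<Sum>x\<in>UNIV. pmf Q x * G (h x))"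
    by (rule sum.group) auto
  finally show ?thesis by simp
qed

lemma seq_transfer:
  fixes Q :: "'a::finite pmf" and h :: "'a \<Rightarrow> 'b::finite"
  shows "(\<Sum>gs\<in>{gs. length gs = n}. prod_list (map (pmf Q) gs) * F (map h gs))
       = (\<Sum>ys\<in>{ys. length ys = n}. prod_list (map (pmf (map_pmf h Q)) ys) * F ys)"
proof (induction n arbitrary: F)
  case 0
  then show ?case by simp
next
  case (Suc n)
  have "(\<Sum>gs\<in>{gs. length gs = Suc n}. prod_list (map (pmf Q) gs) * F (map h gs))
     = (\<Sum>x\<in>UNIV. pmf Q x * (\<Sum>gs\<in>{gs. length gs = n}. prod_list (map (pmf Q) gs) * F (h x # map h gs)))"
    by (simp add: sum_lists_Suc sum_distrib_left mult.assoc)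
  also have "\<dots> = (\<Sum>x\<in>UNIV. pmf Q x * (\<Sum>ys\<in>{ys. length ys = n}. prod_list (map (pmf (map_pmf h Q)) ys) * F (h x # ys)))"
    using Suc.IH[of "\<lambda>ys. F (h _ # ys)"] by simp
  also have "\<dots> = (\<Sum>y\<in>UNIV. pmf (map_pmf h Q) y * (\<Sum>ys\<in>{ys. length ys = n}. prod_list (map (pmf (map_pmf h Q)) ys) * F (y # ys)))"
    by (rule fiber_sum[where G = "\<lambda>y. (\<Sum>ys\<in>{ys. length ys = n}. prod_list (map (pmf (map_pmf h Q)) ys) * F (y # ys))"])
  also have "\<dots> = (\<Sum>ys\<in>{ys. length ys = Suc n}. prod_list (map (pmf (map_pmf h Q)) ys) * F ys)"
    by (simp add: sum_lists_Suc sum_distrib_left mult.assoc)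
  finally show ?case .
qed

lemma law_pair:
  fixes Q :: "'a pmf"
  assumes "measure_pmf.prob Q {g. A g} = a" "measure_pmf.prob Q {g. B g} = b"
    "measure_pmf.prob Q {g. A g \<and> B g} = a * b" "0 \<le> a" "a \<le> 1" "0 \<le> b" "b \<le> 1"
  shows "map_pmf (\<lambda>g. (A g, B g)) Q = pair_pmf (bernoulli_pmf a) (bernoulli_pmf b)"
proof (rule pmf_eqI)
  fix z :: "bool \<times> bool"
  obtain u v where z: "z = (u, v)" by (cases z)
  have AnB: "measure_pmf.prob Q {g. A g \<and> \<not> B g} = a - a*b"
  proof -
    have "{g. A g \<and> \<not> B g} = {g. A g} - {g. A g \<and> B g}" by auto
    then show ?thesis using assms by (simp add: measure_pmf.finite_measure_Diff subset_eq)
  qed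
  have nAB: "measure_pmf.prob Q {g. \<not> A g \<and> B g} = b - a*b"
  proof -
    have "{g. \<not> A g \<and> B g} = {g. B g} - {g. A g \<and> B g}" by auto
    then show ?thesis using assms by (simp add: measure_pmf.finite_measure_Diff subset_eq)
  qed
  have nAnB: "measure_pmf.prob Q {g. \<not> A g \<and> \<not> B g} = 1 - a - b + a*b"
  proof -
    have "{g. \<not> A g \<and> \<not> B g} = UNIV - {g. B g} - {g. A g \<and> \<not> B g}" by auto
    moreover have "measure_pmf.prob Q (UNIV - {g. B g}) = 1 - b"
      using assms by (simp add: measure_pmf.prob_compl[of "{g. B g}", simplified])
    ultimately show ?thesis using AnB assms
      by (simp add: measure_pmf.finite_measure_Diff subset_eq)
  qed
  have "pmf (map_pmf (\<lambda>g. (A g, B g)) Q) (u, v) = measure_pmf.prob Q {g. A g = u \<and> B g = v}"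
    by (simp add: pmf_map vimage_def)
  then show "pmf (map_pmf (\<lambda>g. (A g, B g)) Q) z = pmf (pair_pmf (bernoulli_pmf a) (bernoulli_pmf b)) z"
    using assms AnB nAB nAnB unfolding z
    by (cases u; cases v) (simp_all add: pmf_pair algebra_simps)
qed


lemma indep_law1: "map_pmf (\<lambda>g. (g11 g, g21 g)) (indep_gains pd pc) = pair_pmf (bernoulli_pmf pd) (bernoulli_pmf pc)"
proof -
  have h: "(\<lambda>g::gain. (g11 g, g21 g)) = (\<lambda>(a,b). (id a, (fst \<circ> snd) b))"
    by (auto simp: g11_def g21_def)
  show ?thesis unfolding indep_gains_def h map_pair
    by (simp add: map_pmf_comp[symmetric] map_fst_pair_pmf map_snd_pair_pmf)
qed

lemma indep_law2: "map_pmf (\<lambda>g. (g22 g, g12 g)) (indep_gains pd pc) = pair_pmf (bernoulli_pmf pd) (bernoulli_pmf pc)"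
proof -
  let ?X = "indep_gains pd pc"
  have h: "(\<lambda>g::gain. (g22 g, g12 g)) = (\<lambda>(x, y). (y, x)) \<circ> (\<lambda>(b,cd). (id b, snd cd)) \<circ> snd"
    by (auto simp: g22_def g12_def)
  have "map_pmf (\<lambda>(b,cd). (id b, snd cd)) (map_pmf snd ?X) = pair_pmf (bernoulli_pmf pc) (bernoulli_pmf pd)"
    unfolding indep_gains_def map_snd_pair_pmf map_pair by (simp add: map_snd_pair_pmf)
  moreover have "map_pmf (\<lambda>g. (g22 g, g12 g)) ?X = map_pmf (\<lambda>(x,y).(y,x)) (map_pmf (\<lambda>(b,cd). (id b, snd cd)) (map_pmf snd ?X))"
    by (simp add: map_pmf_comp g22_def g12_def split_beta)
  ultimately show ?thesis
    by (simp add: pair_commute_pmf[of "bernoulli_pmf pd"])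
qed

lemma err1_eq:
  assumes "map_pmf (\<lambda>g. (g11 g, g21 g)) Q = map_pmf (\<lambda>g. (g11 g, g21 g)) Q'"
  shows "err1 Q n M1 M2 f1 f2 \<phi> = err1 Q' n M1 M2 f1 f2 \<phi>"
proof -
  let ?h = "\<lambda>g. (g11 g, g21 g)"
  have key: "(\<Sum>gs\<in>{gs. length gs = n}. seq_prob P gs *
        (if \<phi> (rx1 n gs (f1 w1) (f2 w2)) (map g11 gs) (map g21 gs) = w1 then 0 else 1))
     = (\<Sum>ys\<in>{ys. length ys = n}. prod_list (map (pmf (map_pmf ?h P)) ys) *
        (if \<phi> (map (\<lambda>t. (fst (ys!t) \<and> f1 w1 t) \<noteq> (snd (ys!t) \<and> f2 w2 t)) [0..<n]) (map fst ys) (map snd ys) = w1 then 0 else 1))" (is "_ = ?R")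
    for P w1 w2
  proof -
    have "(\<Sum>gs\<in>{gs. length gs = n}. seq_prob P gs *
        (if \<phi> (rx1 n gs (f1 w1) (f2 w2)) (map g11 gs) (map g21 gs) = w1 then 0 else 1))
      = (\<Sum>gs\<in>{gs. length gs = n}. prod_list (map (pmf P) gs) *
        (\<lambda>ys. if \<phi> (map (\<lambda>t. (fst (ys!t) \<and> f1 w1 t) \<noteq> (snd (ys!t) \<and> f2 w2 t)) [0..<n]) (map fst ys) (map snd ys) = w1 then 0 else 1) (map ?h gs))"
    proof (rule sum.cong[OF refl])
      fix gs :: "gain list" assume "gs \<in> {gs. length gs = n}"
      then have l: "length gs = n" by simp
      have "map (\<lambda>t. (fst (map ?h gs ! t) \<and> f1 w1 t) \<noteq> (snd (map ?h gs ! t) \<and> f2 w2 t)) [0..<n]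
          = rx1 n gs (f1 w1) (f2 w2)"
        unfolding rx1_def using l by (auto intro!: map_cong)
      moreover have "map fst (map ?h gs) = map g11 gs" "map snd (map ?h gs) = map g21 gs" by auto
      ultimately show "seq_prob P gs *
        (if \<phi> (rx1 n gs (f1 w1) (f2 w2)) (map g11 gs) (map g21 gs) = w1 then 0 else 1) =
        prod_list (map (pmf P) gs) *
        (\<lambda>ys. if \<phi> (map (\<lambda>t. (fst (ys!t) \<and> f1 w1 t) \<noteq> (snd (ys!t) \<and> f2 w2 t)) [0..<n]) (map fst ys) (map snd ys) = w1 then 0 else 1) (map ?h gs)"
        by (simp add: seq_prob_def o_def)
    qed
    also have "\<dots> = ?R" by (rule seq_transfer)
    finally show ?thesis .
  qed
  show ?thesis unfolding err1_def key assms ..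
qed

lemma err2_eq:
  assumes "map_pmf (\<lambda>g. (g22 g, g12 g)) Q = map_pmf (\<lambda>g. (g22 g, g12 g)) Q'"
  shows "err2 Q n M1 M2 f1 f2 \<phi> = err2 Q' n M1 M2 f1 f2 \<phi>"
proof -
  let ?h = "\<lambda>g. (g22 g, g12 g)"
  have key: "(\<Sum>gs\<in>{gs. length gs = n}. seq_prob P gs *
        (if \<phi> (rx2 n gs (f1 w1) (f2 w2)) (map g22 gs) (map g12 gs) = w2 then 0 else 1))
     = (\<Sum>ys\<in>{ys. length ys = n}. prod_list (map (pmf (map_pmf ?h P)) ys) *
        (if \<phi> (map (\<lambda>t. (fst (ys!t) \<and> f2 w2 t) \<noteq> (snd (ys!t) \<and> f1 w1 t)) [0..<n]) (map fst ys) (map snd ys) = w2 then 0 else 1))" (is "_ = ?R")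
    for P w1 w2
  proof -
    have "(\<Sum>gs\<in>{gs. length gs = n}. seq_prob P gs *
        (if \<phi> (rx2 n gs (f1 w1) (f2 w2)) (map g22 gs) (map g12 gs) = w2 then 0 else 1))
      = (\<Sum>gs\<in>{gs. length gs = n}. prod_list (map (pmf P) gs) *
        (\<lambda>ys. if \<phi> (map (\<lambda>t. (fst (ys!t) \<and> f2 w2 t) \<noteq> (snd (ys!t) \<and> f1 w1 t)) [0..<n]) (map fst ys) (map snd ys) = w2 then 0 else 1) (map ?h gs))"
    proof (rule sum.cong[OF refl])
      fix gs :: "gain list" assume "gs \<in> {gs. length gs = n}"
      then have l: "length gs = n" by simp
      have "map (\<lambda>t. (fst (map ?h gs ! t) \<and> f2 w2 t) \<noteq> (snd (map ?h gs ! t) \<and> f1 w1 t)) [0..<n]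
          = rx2 n gs (f1 w1) (f2 w2)"
        unfolding rx2_def using l by (auto intro!: map_cong)
      moreover have "map fst (map ?h gs) = map g22 gs" "map snd (map ?h gs) = map g12 gs" by auto
      ultimately show "seq_prob P gs *
        (if \<phi> (rx2 n gs (f1 w1) (f2 w2)) (map g22 gs) (map g12 gs) = w2 then 0 else 1) =
        prod_list (map (pmf P) gs) *
        (\<lambda>ys. if \<phi> (map (\<lambda>t. (fst (ys!t) \<and> f2 w2 t) \<noteq> (snd (ys!t) \<and> f1 w1 t)) [0..<n]) (map fst ys) (map snd ys) = w2 then 0 else 1) (map ?h gs)"
        by (simp add: seq_prob_def o_def)
    qed
    also have "\<dots> = ?R" by (rule seq_transfer)
    finally show ?thesis .
  qed
  show ?thesis unfolding err2_def key assms ..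
qed


theorem lemma2:
  fixes pd pc :: real and Q :: "gain pmf"
  assumes "0 \<le> pd" "pd \<le> 1" "0 \<le> pc" "pc \<le> 1"
    and "measure_pmf.prob Q {g. g11 g} = pd" "measure_pmf.prob Q {g. g22 g} = pd"
    and "measure_pmf.prob Q {g. g21 g} = pc" "measure_pmf.prob Q {g. g12 g} = pc"
    and "measure_pmf.prob Q {g. g11 g \<and> g21 g} =
           measure_pmf.prob Q {g. g11 g} * measure_pmf.prob Q {g. g21 g}"
    and "measure_pmf.prob Q {g. g22 g \<and> g12 g} =
           measure_pmf.prob Q {g. g22 g} * measure_pmf.prob Q {g. g12 g}"
  shows "capacity_region (indep_gains pd pc) \<subseteq> capacity_region Q"
proof -
  have l1: "map_pmf (\<lambda>g. (g11 g, g21 g)) Q = map_pmf (\<lambda>g. (g11 g, g21 g)) (indep_gains pd pc)"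
    unfolding indep_law1 using assms by (intro law_pair) auto
  have l2: "map_pmf (\<lambda>g. (g22 g, g12 g)) Q = map_pmf (\<lambda>g. (g22 g, g12 g)) (indep_gains pd pc)"
    unfolding indep_law2 using assms by (intro law_pair) auto
  have e: "achievable (indep_gains pd pc) = achievable Q"
    apply (rule ext)+
    unfolding achievable_def err1_eq[OF l1] err2_eq[OF l2] ..
  show ?thesis unfolding capacity_region_def e ..
qed

end
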